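(* The map on inversion sequences given by Algorithm A (described below) is an involution: if $\epsilon$ is an inversion sequence, $\epsilon'$ is the result of applying Algorithm A to $\epsilon$, and $\epsilon''$ is the result of applying Algorithm A to $\epsilon'$, then $\epsilon''=\epsilon$.
   Context: An inversion sequence of length $n$ is an integer sequence with $0\le\epsilon_i<i$ for all $i$. The reduction of an integer word replaces each occurrence of its $k$-th smallest distinct value by $k-1$; a consecutive pattern $\underline{p_1p_2p_3p_4}$ occurs in a sequence at position $i$ if the reduction of its entries in positions $i,\dots,i+3$ equals $p_1p_2p_3p_4$. Let $p=\underline{0102}$ and $q=\underline{0112}$. Algorithm A, on input an integer sequence $\mathrm{seq}=\epsilon_1\cdots\epsilon_n$: let $E_p$, $E_q$ be the sets of positions of occurrences of $p$, resp. $q$, in the input sequence; set $\mathrm{last}:=$ null. For $i=1,2,\dots,n$ in order: let $N_p,N_q$ be the sets of positions of occurrences of $p$, resp. $q$, in the current sequence. If $i-2\in E_p$: set $\mathrm{last}:=\mathrm{seq}[i]$ and $\mathrm{seq}[i]:=\mathrm{seq}[i-1]$. Else if $i-2\in E_q$: set $\mathrm{last}:=\mathrm{seq}[i]$ and $\mathrm{seq}[i]:=\mathrm{seq}[i-2]$. Else if $i-2\in N_p$ or $i-2\in N_q$: swap the values of $\mathrm{seq}[i]$ and $\mathrm{last}$. Output $\mathrm{seq}$. *)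

theory Defs
  imports Main
begin

text \<open>Sequences are lists of naturals; paper positions are 1-indexed,
  position i corresponds to list index i - 1.\<close>

definition inversion_seq :: "nat list \<Rightarrow> bool" where
  "inversion_seq e \<longleftrightarrow> (\<forall>i < length e. e ! i < i + 1)"

definition reduce :: "nat list \<Rightarrow> nat list" where
  "reduce w = map (\<lambda>x. card {y \<in> set w. y < x}) w"

definition occurs_at :: "nat list \<Rightarrow> nat list \<Rightarrow> nat \<Rightarrow> bool" where
  "occurs_at pat s i \<longleftrightarrow> 1 \<le> i \<and> i + 3 \<le> length s \<and> reduce (take 4 (drop (i - 1) s)) = pat"

definition pat_p :: "nat list" where "pat_p = [0,1,0,2]"
definition pat_q :: "nat list" where "pat_q = [0,1,1,2]"

text \<open>One iteration (index i, 1-indexed) of Algorithm A; inp is the original input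
  (used for E_p, E_q), the state is the current sequence and the variable last
  (None = null).\<close>
definition algA_step :: "nat list \<Rightarrow> nat list \<times> nat option \<Rightarrow> nat \<Rightarrow> nat list \<times> nat option" where
  "algA_step inp st i = (let s = fst st; last = snd st in
     if 3 \<le> i \<and> occurs_at pat_p inp (i - 2) then (s[i - 1 := s ! (i - 2)], Some (s ! (i - 1)))
     else if 3 \<le> i \<and> occurs_at pat_q inp (i - 2) then (s[i - 1 := s ! (i - 3)], Some (s ! (i - 1)))
     else if 3 \<le> i \<and> (occurs_at pat_p s (i - 2) \<or> occurs_at pat_q s (i - 2)) then
       (case last of None \<Rightarrow> (s, last)
                   | Some v \<Rightarrow> (s[i - 1 := v], Some (s ! (i - 1))))
     else (s, last))"

definition algA :: "nat list \<Rightarrow> nat list" where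
  "algA e = fst (foldl (algA_step e) (e, None) [1..<length e + 1])"

end

theory Submission
  imports Defs
begin

definition P4 :: "nat \<Rightarrow> nat \<Rightarrow> nat \<Rightarrow> nat \<Rightarrow> bool" where
  "P4 a b c d \<longleftrightarrow> a < b \<and> c = a \<and> b < d"
definition Q4 :: "nat \<Rightarrow> nat \<Rightarrow> nat \<Rightarrow> nat \<Rightarrow> bool" where
  "Q4 a b c d \<longleftrightarrow> a < b \<and> c = b \<and> b < d"

definition F :: "bool \<Rightarrow> nat \<Rightarrow> nat \<Rightarrow> nat \<Rightarrow> nat \<Rightarrow> nat \<Rightarrow> nat \<Rightarrow> nat option \<Rightarrow> nat \<times> nat option" where
  "F act y1 y2 c d x1 x2 L = (if \<not> act then (c, L)
     else if P4 y1 y2 c d then (x2, Some c)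
     else if Q4 y1 y2 c d then (x1, Some c)
     else if P4 x1 x2 c d \<or> Q4 x1 x2 c d then
       (case L of None \<Rightarrow> (c, L) | Some v \<Rightarrow> (v, Some c))
     else (c, L))"

definition INV :: "nat \<Rightarrow> nat \<Rightarrow> nat \<Rightarrow> nat \<Rightarrow> nat \<Rightarrow> nat option \<Rightarrow> nat option \<Rightarrow> bool" where
  "INV y1 y2 x1 x2 c L M \<longleftrightarrow>
     (x2 \<noteq> y2 \<longrightarrow> x1 = y1 \<and> x2 \<le> y1 \<and> y2 \<le> y1 \<and> y1 < c \<and> L = Some y2 \<and> M = Some x2) \<and>
     (x1 \<noteq> y1 \<longrightarrow> x2 = y2 \<and> x1 < y2 \<and> y1 < y2 \<and> L = Some y1 \<and> M = Some x1)"

lemma local_step: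
  assumes "INV y1 y2 x1 x2 c L M"
    and "F True y1 y2 c d x1 x2 L = (ov, L1)"
    and "F a2 y2 c d g x2 ov L1 = (o1, L2)"
    and "F True x1 x2 ov o1 y1 y2 M = (r, M1)"
  shows "r = c \<and> INV y2 c x2 ov d L1 M1"
proof -
  consider (A) "x1 = y1" "x2 = y2" | (B) "x2 \<noteq> y2" "x1 = y1" "x2 \<le> y1" "y2 \<le> y1" "y1 < c" "L = Some y2" "M = Some x2"
    | (C) "x1 \<noteq> y1" "x2 = y2" "x1 < y2" "y1 < y2" "L = Some y1" "M = Some x1"
    using assms(1) unfolding INV_def by blast
  then show ?thesis
  proof cases
    case A
    then show ?thesis using assms(2-4) unfolding F_def INV_def P4_def Q4_def
      by (cases a2; simp split: if_split_asm option.splits; auto)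
  next
    case B
    then show ?thesis using assms(2-4) unfolding F_def INV_def P4_def Q4_def
      by (cases a2; simp split: if_split_asm option.splits; auto)
  next
    case C
    then show ?thesis using assms(2-4) unfolding F_def INV_def P4_def Q4_def
      by (cases a2; simp split: if_split_asm option.splits; auto)
  qed
qed


lemma card_lt_eq0:
  assumes f: "finite S" and c0: "card {y \<in> S. y < (x::nat)} = 0" and z: "z \<in> S"
  shows "x \<le> z"
proof (rule ccontr)
  assume n: "\<not> x \<le> z"
  have fin: "finite {y \<in> S. y < x}" using f by simp
  have "z \<in> {y \<in> S. y < x}" using z n by simp
  then have "{y \<in> S. y < x} \<noteq> {}" by blast
  then have "card {y \<in> S. y < x} \<noteq> 0" using fin by simp
  then show False using c0 by (rule notE)
qed

lemma reduce4: "reduce [a,b,c,d] = map (\<lambda>x. card {y \<in> {a,b,c,d}. y < x}) [a,b,c,d]"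
  unfolding reduce_def by simp

lemma reduce_p: "reduce [a,b,c,d] = pat_p \<longleftrightarrow> P4 a b c d"
proof
  assume h: "reduce [a,b,c,d] = pat_p"
  let ?S = "{a,b,c,d}"
  have fa: "card {y \<in> ?S. y < a} = 0" and fb: "card {y \<in> ?S. y < b} = 1"
   and fc: "card {y \<in> ?S. y < c} = 0" and fd: "card {y \<in> ?S. y < d} = 2"
    using h unfolding reduce4 pat_p_def by auto
  have amin: "\<And>z. z \<in> ?S \<Longrightarrow> a \<le> z" using card_lt_eq0[OF _ fa] by auto
  have cmin: "\<And>z. z \<in> ?S \<Longrightarrow> c \<le> z" using card_lt_eq0[OF _ fc] by auto
  have ca: "c = a" using amin cmin by (meson insertCI le_antisym)
  have ab: "a < b"
  proof (rule ccontr)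
    assume "\<not> a < b"
    then have "{y \<in> ?S. y < b} = {}" using amin by fastforce
    then have "card {y \<in> ?S. y < b} = 0" by (simp only: card.empty)
    then show False using fb by linarith
  qed
  have bd: "b < d"
  proof (rule ccontr)
    assume nb: "\<not> b < d"
    have "{y \<in> ?S. y < d} \<subseteq> {a}" using nb ca amin by auto
    then have "card {y \<in> ?S. y < d} \<le> card {a}" by (intro card_mono) auto
    then show False using fd by simp
  qed
  show "P4 a b c d" unfolding P4_def using ab bd ca by simp
next
  assume "P4 a b c d"
  then have h: "a < b" "c = a" "b < d" unfolding P4_def by auto
  have 1: "{y \<in> {a,b,c,d}. y < a} = {}" using h by auto
  have 2: "{y \<in> {a,b,c,d}. y < b} = {a}" using h by auto
  have 3: "{y \<in> {a,b,c,d}. y < d} = {a,b}" using h by auto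
  have k1: "card {y \<in> {a,b,c,d}. y < a} = 0" using 1 by simp
  have k2: "card {y \<in> {a,b,c,d}. y < b} = 1" using 2 by simp
  have k3: "card {y \<in> {a,b,c,d}. y < c} = 0" using 1 h(2) by simp
  have k4: "card {y \<in> {a,b,c,d}. y < d} = 2" using 3 h(1) by simp
  show "reduce [a,b,c,d] = pat_p" by (simp only: reduce4 list.map k1 k2 k3 k4 pat_p_def)
qed

lemma reduce_q: "reduce [a,b,c,d] = pat_q \<longleftrightarrow> Q4 a b c d"
proof
  assume h: "reduce [a,b,c,d] = pat_q"
  let ?S = "{a,b,c,d}"
  have fa: "card {y \<in> ?S. y < a} = 0" and fb: "card {y \<in> ?S. y < b} = 1"
   and fc: "card {y \<in> ?S. y < c} = 1" and fd: "card {y \<in> ?S. y < d} = 2"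
    using h unfolding reduce4 pat_q_def by auto
  have amin: "\<And>z. z \<in> ?S \<Longrightarrow> a \<le> z" using card_lt_eq0[OF _ fa] by auto
  have ab: "a < b"
  proof (rule ccontr)
    assume "\<not> a < b"
    then have "{y \<in> ?S. y < b} = {}" using amin by fastforce
    then have "card {y \<in> ?S. y < b} = 0" by (simp only: card.empty)
    then show False using fb by linarith
  qed
  have ac: "a < c"
  proof (rule ccontr)
    assume "\<not> a < c"
    then have "{y \<in> ?S. y < c} = {}" using amin by fastforce
    then have "card {y \<in> ?S. y < c} = 0" by (simp only: card.empty)
    then show False using fc by linarith
  qed
  have cb: "c = b"
  proof (rule ccontr)
    assume "c \<noteq> b"
    then consider "c < b" | "b < c" by linarith
    then show False
    proof cases
      case 1
      then have "{a, c} \<subseteq> {y \<in> ?S. y < b}" using ac by auto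
      then have "card {a, c} \<le> card {y \<in> ?S. y < b}" by (intro card_mono) auto
      then show False using fb ac by simp
    next
      case 2
      then have "{a, b} \<subseteq> {y \<in> ?S. y < c}" using ab by auto
      then have "card {a, b} \<le> card {y \<in> ?S. y < c}" by (intro card_mono) auto
      then show False using fc ab by simp
    qed
  qed
  have bd: "b < d"
  proof (rule ccontr)
    assume nb: "\<not> b < d"
    have "{y \<in> ?S. y < d} \<subseteq> {a}" using nb cb amin by auto
    then have "card {y \<in> ?S. y < d} \<le> card {a}" by (intro card_mono) auto
    then show False using fd by simp
  qed
  show "Q4 a b c d" unfolding Q4_def using ab bd cb by simp
next
  assume "Q4 a b c d"
  then have h: "a < b" "c = b" "b < d" unfolding Q4_def by auto
  have 1: "{y \<in> {a,b,c,d}. y < a} = {}" using h by auto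
  have 2: "{y \<in> {a,b,c,d}. y < b} = {a}" using h by auto
  have 3: "{y \<in> {a,b,c,d}. y < d} = {a,b}" using h by auto
  have k1: "card {y \<in> {a,b,c,d}. y < a} = 0" using 1 by simp
  have k2: "card {y \<in> {a,b,c,d}. y < b} = 1" using 2 by simp
  have k3: "card {y \<in> {a,b,c,d}. y < c} = 1" using 2 h(2) by simp
  have k4: "card {y \<in> {a,b,c,d}. y < d} = 2" using 3 h(1) by simp
  show "reduce [a,b,c,d] = pat_q" by (simp only: reduce4 list.map k1 k2 k3 k4 pat_q_def)
qed


lemma take4: "i + 3 < length s \<Longrightarrow> take 4 (drop i s) = [s!i, s!(i+1), s!(i+2), s!(i+3)]"
proof (rule nth_equalityI)
  assume "i + 3 < length s"
  then show "length (take 4 (drop i s)) = length [s!i, s!(i+1), s!(i+2), s!(i+3)]" by simp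
next
  fix k assume h: "i + 3 < length s" "k < length (take 4 (drop i s))"
  then have "k < 4" by simp
  then consider "k = 0" | "k = 1" | "k = 2" | "k = 3" by linarith
  then show "take 4 (drop i s) ! k = [s!i, s!(i+1), s!(i+2), s!(i+3)] ! k"
    using h by cases (simp_all add: add.commute)
qed

lemma occ_char:
  assumes "2 \<le> t"
  shows "occurs_at pat s (Suc t - 2) \<longleftrightarrow> (t + 1 < length s \<and> reduce [s!(t-2), s!(t-1), s!t, s!(t+1)] = pat)"
proof (cases "t + 1 < length s")
  case True
  have "take 4 (drop (t - 2) s) = [s!(t-2), s!(t-2+1), s!(t-2+2), s!(t-2+3)]"
    using True assms by (intro take4) simp
  moreover have "t-2+1 = t-1" "t-2+2 = t" "t-2+3 = t+1" using assms by auto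
  ultimately have "take 4 (drop (t - 2) s) = [s!(t-2), s!(t-1), s!t, s!(t+1)]" by simp
  moreover have "Suc t - 2 - 1 = t - 2" "1 \<le> Suc t - 2" "Suc t - 2 + 3 \<le> length s" using assms True by auto
  ultimately show ?thesis unfolding occurs_at_def using True by simp
next
  case False
  then show ?thesis unfolding occurs_at_def using assms by auto
qed

definition st :: "nat list \<Rightarrow> nat \<Rightarrow> nat list \<times> nat option" where
  "st e k = foldl (algA_step e) (e, None) [1..<k+1]"

lemma st_0: "st e 0 = (e, None)" by (simp add: st_def)
lemma st_Suc: "st e (Suc k) = algA_step e (st e k) (Suc k)" by (simp add: st_def)
lemma algA_st: "algA e = fst (st e (length e))" by (simp add: algA_def st_def)

lemma step_len: "length (fst (algA_step inp sl i)) = length (fst sl)"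
  by (simp add: algA_step_def Let_def split: option.splits)
lemma step_nth: "m \<noteq> i - 1 \<Longrightarrow> fst (algA_step inp sl i) ! m = fst sl ! m"
  by (simp add: algA_step_def Let_def split: option.splits)

lemma st_len: "length (fst (st e k)) = length e"
  by (induction k) (simp_all add: st_0 st_Suc step_len)

lemma st_after: "k \<le> m \<Longrightarrow> fst (st e k) ! m = e ! m"
  by (induction k) (simp_all add: st_0 st_Suc step_nth)

lemma st_frozen: "k \<le> k' \<Longrightarrow> m < k \<Longrightarrow> fst (st e k') ! m = fst (st e k) ! m"
  by (induction k' rule: dec_induct) (simp_all add: st_Suc step_nth)

lemma algA_len: "length (algA e) = length e" by (simp add: algA_st st_len)

lemma st_out: "m < k \<Longrightarrow> k \<le> length e \<Longrightarrow> fst (st e k) ! m = algA e ! m"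
  unfolding algA_st using st_frozen by metis

lemma step_char:
  assumes tl: "t < length e"
  shows "(algA e ! t, snd (st e (Suc t))) = F (2 \<le> t \<and> t + 1 < length e) (e!(t-2)) (e!(t-1)) (e!t) (e!(t+1)) (algA e!(t-2)) (algA e!(t-1)) (snd (st e t))"
proof -
  obtain s L where sL: "st e t = (s, L)" by (cases "st e t")
  have ls: "length s = length e" using st_len[of e t] sL by simp
  have Ld: "snd (st e t) = L" using sL by simp
  have out: "algA e ! t = fst (st e (Suc t)) ! t" using st_out[of t "Suc t" e] tl by simp
  have s0: "s!t = e!t" "s!(t+1) = e!(t+1)" using st_after[of t t e] st_after[of t "t+1" e] sL by auto
  have s1: "1 \<le> t \<Longrightarrow> s!(t-1) = algA e!(t-1)" using st_out[of "t-1" t e] tl sL by simp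
  have s2: "2 \<le> t \<Longrightarrow> s!(t-2) = algA e!(t-2)" using st_out[of "t-2" t e] tl sL by simp
  have stS: "st e (Suc t) = algA_step e (s, L) (Suc t)" by (simp add: st_Suc sL)
  show ?thesis
  proof (cases "2 \<le> t \<and> t + 1 < length e")
    case False
    have "algA_step e (s, L) (Suc t) = (s, L)"
      using False ls unfolding algA_step_def occurs_at_def by auto
    then show ?thesis using out stS s0 sL False unfolding F_def by simp
  next
    case True
    have oe: "occurs_at pat e (Suc t - 2) \<longleftrightarrow> reduce [e!(t-2), e!(t-1), e!t, e!(t+1)] = pat" for pat
      using occ_char[of t pat e] True by simp
    have os: "occurs_at pat s (Suc t - 2) \<longleftrightarrow> reduce [algA e!(t-2), algA e!(t-1), e!t, e!(t+1)] = pat" for pat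
      using occ_char[of t pat s] True ls s0 s1 s2 by simp
    have idx: "Suc t - 1 = t" "Suc t - 2 = t - 1" "Suc t - 3 = t - 2" "3 \<le> Suc t" using True by auto
    have tls: "t < length s" using ls tl by simp
    show ?thesis
      unfolding out stS algA_step_def Let_def fst_conv snd_conv idx F_def
      using True oe os reduce_p reduce_q tls s0 s1 s2 Ld
      by (auto split: option.splits)
  qed
qed

lemma INV_triv: "INV y1 y2 y1 y2 c L M" unfolding INV_def by simp

theorem theorem4:
  fixes e :: "nat list"
  assumes "inversion_seq e"
  shows "algA (algA e) = e"
proof -
  define e' where "e' = algA e"
  define n where "n = length e"
  have len': "length e' = n" unfolding e'_def n_def by (rule algA_len)
  have small: "e'!t = e!t" if "t < n" "t < 2" for t
    using step_char[of t e] that unfolding e'_def n_def F_def by simp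
  have main: "(\<forall>m<t. algA e' ! m = e!m) \<and> (2 \<le> t \<longrightarrow> t < n \<longrightarrow>
      INV (e!(t-2)) (e!(t-1)) (e'!(t-2)) (e'!(t-1)) (e!t) (snd (st e t)) (snd (st e' t)))"
    if "t \<le> n" for t
    using that
  proof (induction t)
    case 0
    then show ?case by simp
  next
    case (Suc t)
    then have tn: "t < n" by simp
    have IH1: "\<forall>m<t. algA e' ! m = e!m" using Suc by simp
    have r1: "(e'!t, snd (st e (Suc t))) = F (2 \<le> t \<and> t + 1 < n) (e!(t-2)) (e!(t-1)) (e!t) (e!(t+1)) (e'!(t-2)) (e'!(t-1)) (snd (st e t))"
      using step_char[of t e] tn unfolding e'_def n_def by simp
    have r2: "(algA e' ! t, snd (st e' (Suc t))) = F (2 \<le> t \<and> t + 1 < n) (e'!(t-2)) (e'!(t-1)) (e'!t) (e'!(t+1)) (algA e'!(t-2)) (algA e'!(t-1)) (snd (st e' t))"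
      using step_char[of t e'] tn len' by simp
    show ?case
    proof (cases "2 \<le> t \<and> t + 1 < n")
      case False
      then have "algA e' ! t = e' ! t" using r2 unfolding F_def by simp
      moreover have "e'!t = e!t" using r1 False unfolding F_def by simp
      moreover have "2 \<le> Suc t \<longrightarrow> Suc t < n \<longrightarrow>
        INV (e!(Suc t-2)) (e!(Suc t-1)) (e'!(Suc t-2)) (e'!(Suc t-1)) (e!Suc t) (snd (st e (Suc t))) (snd (st e' (Suc t)))"
      proof (intro impI)
        assume a: "2 \<le> Suc t" "Suc t < n"
        then have t1: "t = 1" using False by simp
        have "e'!0 = e!0" "e'!1 = e!1" using small[of 0] small[of 1] a t1 by auto
        then show "INV (e!(Suc t-2)) (e!(Suc t-1)) (e'!(Suc t-2)) (e'!(Suc t-1)) (e!Suc t) (snd (st e (Suc t))) (snd (st e' (Suc t)))"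
          using t1 INV_triv by simp
      qed
      ultimately show ?thesis using IH1 less_Suc_eq by auto
    next
      case True
      have I: "INV (e!(t-2)) (e!(t-1)) (e'!(t-2)) (e'!(t-1)) (e!t) (snd (st e t)) (snd (st e' t))"
        using Suc True by simp
      have a2: "algA e'!(t-2) = e!(t-2)" "algA e'!(t-1) = e!(t-1)" using IH1 True by auto
      have r3: "(e'!(Suc t), snd (st e (Suc (Suc t)))) = F (2 \<le> Suc t \<and> Suc t + 1 < n) (e!(t-1)) (e!t) (e!(t+1)) (e!(t+2)) (e'!(t-1)) (e'!t) (snd (st e (Suc t)))"
        using step_char[of "Suc t" e] True unfolding e'_def n_def by (simp add: Suc_diff_le numeral_2_eq_2)
      have "algA e' ! t = e!t \<and> INV (e!(t-1)) (e!t) (e'!(t-1)) (e'!t) (e!(t+1)) (snd (st e (Suc t))) (snd (st e' (Suc t)))"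
        using local_step[OF I r1[symmetric, simplified True simp_thms] r3[symmetric]] r2[symmetric, unfolded a2] True
        by simp
      then show ?thesis using IH1 less_Suc_eq True by (auto simp: numeral_2_eq_2)
    qed
  qed
  have "\<forall>m<n. algA e' ! m = e!m" using main[of n] by simp
  then show ?thesis
    by (intro nth_equalityI) (simp_all add: algA_len len' n_def e'_def[symmetric])
qed

end
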